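(* Let $(F,+,\cdot)$ be a (left) near-field, $I$ an index set, and $\boldsymbol\sigma=(\sigma_i)_{i\in I}$, $\boldsymbol\rho=(\rho_i)_{i\in I}$ families of multiplicative automorphisms of $F$. Let $F^{\boldsymbol\sigma,\boldsymbol\rho}$ be the set of finitely supported families $(\alpha_i)_{i\in I}\in F^I$, with addition $(\alpha_i)_i+_{\boldsymbol\sigma}(\beta_i)_i=(\alpha_i+_{\sigma_i}\beta_i)_i$ and scalar multiplication $\alpha\cdot_{\boldsymbol\rho}(\alpha_i)_i=(\rho_i(\alpha)\alpha_i)_i$. Then $F^{\boldsymbol\sigma,\boldsymbol\rho}$ is a near-vector space over $F$, and for $\mathbf e_j=(\delta_{j,i})_{i\in I}$, every $j\in I$ and every $\gamma\in F\setminus\{0\}$, the element $\gamma\cdot_{\boldsymbol\rho}\mathbf e_j$ lies in the quasi-kernel and $$+_{\gamma\cdot_{\boldsymbol\rho}\mathbf e_j}=+_{\sigma_j\circ\rho_j\circ\varphi_\gamma}.$$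
   Context: A (left) near-field is $(F,+,\cdot,0,1)$ where $(F,\cdot,1)$ is a monoid, $(F\setminus\{0\},\cdot)$ is a group, $(F,+,0)$ is an abelian group, and $\alpha(\beta+\gamma)=\alpha\beta+\alpha\gamma$. A multiplicative automorphism is a monoid automorphism of $(F,\cdot)$. For a multiplicative automorphism $\tau$, $\alpha+_\tau\beta=\tau^{-1}(\tau(\alpha)+\tau(\beta))$. For $\gamma\neq0$, $\varphi_\gamma(\alpha)=\gamma^{-1}\alpha\gamma$. $\delta_{j,i}$ is $1$ if $i=j$ and $0$ otherwise. Near-vector space over $F$ (the scalar group $(F,\cdot,1,0,-1)$): an abelian group with a left action of $(F,\cdot)$ by endomorphisms, with $0,1,-1$ acting as $0,\mathrm{id},-\mathrm{id}$, the action free, and the quasi-kernel $Q(V)=\{u:\forall\alpha,\beta\in F\ \exists\gamma,\ \alpha u+\beta u=\gamma u\}$ generating $V$ additively. For $u\in Q(V)\setminus\{0\}$, $\alpha+_u\beta$ is the unique $\gamma$ with $\alpha u+\beta u=\gamma u$. *)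

theory Defs
  imports Main
begin

definition near_field ::
  "('a \<Rightarrow> 'a \<Rightarrow> 'a) \<Rightarrow> ('a \<Rightarrow> 'a \<Rightarrow> 'a) \<Rightarrow> 'a \<Rightarrow> 'a \<Rightarrow> bool" where
  "near_field add mul zero one \<longleftrightarrow>
     \<comment> \<open>(F,\<cdot>,1) is a monoid\<close>
     (\<forall>a b c. mul (mul a b) c = mul a (mul b c)) \<and>
     (\<forall>a. mul one a = a \<and> mul a one = a) \<and>
     \<comment> \<open>(F minus {0}, \<cdot>) is a group (with identity 1)\<close>
     one \<noteq> zero \<and>
     (\<forall>a b. a \<noteq> zero \<longrightarrow> b \<noteq> zero \<longrightarrow> mul a b \<noteq> zero) \<and>
     (\<forall>a. a \<noteq> zero \<longrightarrow> (\<exists>b. b \<noteq> zero \<and> mul a b = one \<and> mul b a = one)) \<and>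
     \<comment> \<open>(F,+,0) is an abelian group\<close>
     (\<forall>a b c. add (add a b) c = add a (add b c)) \<and>
     (\<forall>a b. add a b = add b a) \<and>
     (\<forall>a. add zero a = a) \<and>
     (\<forall>a. \<exists>b. add a b = zero) \<and>
     \<comment> \<open>left distributivity\<close>
     (\<forall>a b c. mul a (add b c) = add (mul a b) (mul a c))"

definition mult_aut :: "('a \<Rightarrow> 'a \<Rightarrow> 'a) \<Rightarrow> 'a \<Rightarrow> ('a \<Rightarrow> 'a) \<Rightarrow> bool" where
  "mult_aut mul one \<tau> \<longleftrightarrow> bij \<tau> \<and> (\<forall>a b. \<tau> (mul a b) = mul (\<tau> a) (\<tau> b)) \<and> \<tau> one = one"

definition add_tau :: "('a \<Rightarrow> 'a \<Rightarrow> 'a) \<Rightarrow> ('a \<Rightarrow> 'a) \<Rightarrow> 'a \<Rightarrow> 'a \<Rightarrow> 'a" where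
  "add_tau add \<tau> a b = inv \<tau> (add (\<tau> a) (\<tau> b))"

definition nf_inv :: "('a \<Rightarrow> 'a \<Rightarrow> 'a) \<Rightarrow> 'a \<Rightarrow> 'a \<Rightarrow> 'a" where
  "nf_inv mul one g = (THE b. mul g b = one)"

definition nf_neg :: "('a \<Rightarrow> 'a \<Rightarrow> 'a) \<Rightarrow> 'a \<Rightarrow> 'a \<Rightarrow> 'a" where
  "nf_neg add zero a = (THE b. add a b = zero)"

definition conj_map :: "('a \<Rightarrow> 'a \<Rightarrow> 'a) \<Rightarrow> 'a \<Rightarrow> 'a \<Rightarrow> 'a \<Rightarrow> 'a" where
  "conj_map mul one g a = mul (nf_inv mul one g) (mul a g)"

definition quasi_kernel ::
  "'v set \<Rightarrow> ('v \<Rightarrow> 'v \<Rightarrow> 'v) \<Rightarrow> ('a \<Rightarrow> 'v \<Rightarrow> 'v) \<Rightarrow> 'v set" where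
  "quasi_kernel V addV act = {u \<in> V. \<forall>a b. \<exists>c. addV (act a u) (act b u) = act c u}"

inductive_set add_gen :: "'v set \<Rightarrow> ('v \<Rightarrow> 'v \<Rightarrow> 'v) \<Rightarrow> 'v \<Rightarrow> 'v set \<Rightarrow> 'v set"
  for V addV zeroV S where
  gen_zero: "zeroV \<in> add_gen V addV zeroV S"
| gen_base: "u \<in> S \<Longrightarrow> u \<in> add_gen V addV zeroV S"
| gen_add: "u \<in> add_gen V addV zeroV S \<Longrightarrow> w \<in> add_gen V addV zeroV S \<Longrightarrow>
             addV u w \<in> add_gen V addV zeroV S"
| gen_neg: "u \<in> add_gen V addV zeroV S \<Longrightarrow> w \<in> V \<Longrightarrow> addV u w = zeroV \<Longrightarrow>
             w \<in> add_gen V addV zeroV S"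

definition near_vector_space ::
  "('a \<Rightarrow> 'a \<Rightarrow> 'a) \<Rightarrow> ('a \<Rightarrow> 'a \<Rightarrow> 'a) \<Rightarrow> 'a \<Rightarrow> 'a \<Rightarrow>
   'v set \<Rightarrow> ('v \<Rightarrow> 'v \<Rightarrow> 'v) \<Rightarrow> 'v \<Rightarrow> ('a \<Rightarrow> 'v \<Rightarrow> 'v) \<Rightarrow> bool" where
  "near_vector_space add mul zero one V addV zeroV act \<longleftrightarrow>
     \<comment> \<open>(V, addV, zeroV) is an abelian group\<close>
     zeroV \<in> V \<and>
     (\<forall>u\<in>V. \<forall>w\<in>V. addV u w \<in> V) \<and>
     (\<forall>u\<in>V. \<forall>w\<in>V. \<forall>x\<in>V. addV (addV u w) x = addV u (addV w x)) \<and>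
     (\<forall>u\<in>V. \<forall>w\<in>V. addV u w = addV w u) \<and>
     (\<forall>u\<in>V. addV zeroV u = u) \<and>
     (\<forall>u\<in>V. \<exists>w\<in>V. addV u w = zeroV) \<and>
     \<comment> \<open>left action of the monoid (F,\<cdot>) by endomorphisms\<close>
     (\<forall>a. \<forall>u\<in>V. act a u \<in> V) \<and>
     (\<forall>a. \<forall>u\<in>V. \<forall>w\<in>V. act a (addV u w) = addV (act a u) (act a w)) \<and>
     (\<forall>a b. \<forall>u\<in>V. act (mul a b) u = act a (act b u)) \<and>
     \<comment> \<open>0, 1, -1 act as 0, id, -id\<close>
     (\<forall>u\<in>V. act zero u = zeroV) \<and>
     (\<forall>u\<in>V. act one u = u) \<and>
     (\<forall>u\<in>V. addV u (act (nf_neg add zero one) u) = zeroV) \<and>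
     \<comment> \<open>the action is free\<close>
     (\<forall>a b. \<forall>u\<in>V. act a u = act b u \<longrightarrow> u = zeroV \<or> a = b) \<and>
     \<comment> \<open>the quasi-kernel generates V additively\<close>
     V = add_gen V addV zeroV (quasi_kernel V addV act)"

definition add_u :: "('v \<Rightarrow> 'v \<Rightarrow> 'v) \<Rightarrow> ('a \<Rightarrow> 'v \<Rightarrow> 'v) \<Rightarrow> 'v \<Rightarrow> 'a \<Rightarrow> 'a \<Rightarrow> 'a" where
  "add_u addV act u a b = (THE c. addV (act a u) (act b u) = act c u)"

definition fsupp_fams :: "'a \<Rightarrow> ('i \<Rightarrow> 'a) set" where
  "fsupp_fams zero = {f. finite {i. f i \<noteq> zero}}"

definition add_sigma :: "('a \<Rightarrow> 'a \<Rightarrow> 'a) \<Rightarrow> ('i \<Rightarrow> 'a \<Rightarrow> 'a) \<Rightarrow>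
    ('i \<Rightarrow> 'a) \<Rightarrow> ('i \<Rightarrow> 'a) \<Rightarrow> ('i \<Rightarrow> 'a)" where
  "add_sigma add \<sigma> f g = (\<lambda>i. add_tau add (\<sigma> i) (f i) (g i))"

definition smult_rho :: "('a \<Rightarrow> 'a \<Rightarrow> 'a) \<Rightarrow> ('i \<Rightarrow> 'a \<Rightarrow> 'a) \<Rightarrow> 'a \<Rightarrow> ('i \<Rightarrow> 'a) \<Rightarrow> ('i \<Rightarrow> 'a)" where
  "smult_rho mul \<rho> a f = (\<lambda>i. mul (\<rho> i a) (f i))"

definition unit_fam :: "'a \<Rightarrow> 'a \<Rightarrow> 'i \<Rightarrow> ('i \<Rightarrow> 'a)" where
  "unit_fam zero one j = (\<lambda>i. if j = i then one else zero)"

end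

theory Submission imports Defs begin
locale NF =
  fixes add mul :: "'a \<Rightarrow> 'a \<Rightarrow> 'a" and zero one :: 'a
  assumes nf: "near_field add mul zero one"
begin

lemma massoc: "mul (mul a b) c = mul a (mul b c)" using nf unfolding near_field_def by blast
lemma mone: "mul one a = a" "mul a one = a" using nf unfolding near_field_def by blast+
lemma one_nz: "one \<noteq> zero" using nf unfolding near_field_def by blast
lemma mnz: "a \<noteq> zero \<Longrightarrow> b \<noteq> zero \<Longrightarrow> mul a b \<noteq> zero" using nf unfolding near_field_def by blast
lemma ex_inv: "a \<noteq> zero \<Longrightarrow> \<exists>b. b \<noteq> zero \<and> mul a b = one \<and> mul b a = one" using nf unfolding near_field_def by blast
lemma aassoc: "add (add a b) c = add a (add b c)" using nf unfolding near_field_def by blast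
lemma acomm: "add a b = add b a" using nf unfolding near_field_def by blast
lemma azero: "add zero a = a" "add a zero = a" using nf unfolding near_field_def by metis+
lemma ex_neg: "\<exists>b. add a b = zero" using nf unfolding near_field_def by blast
lemma distl: "mul a (add b c) = add (mul a b) (mul a c)" using nf unfolding near_field_def by blast

lemma acancel: assumes "add a b = add a c" shows "b = c"
proof -
  obtain n where n: "add a n = zero" using ex_neg by blast
  have "add n (add a b) = add n (add a c)" using assms by simp
  hence "add (add n a) b = add (add n a) c" by (simp add: aassoc)
  thus ?thesis using n by (simp add: acomm azero)
qed

definition neg where "neg a = nf_neg add zero a"

lemma neg: "add a (neg a) = zero"
proof -
  obtain n where n: "add a n = zero" using ex_neg by blast
  have "(THE b. add a b = zero) = n" by (rule the_equality, fact n, metis n acancel)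
  thus ?thesis using n unfolding neg_def nf_neg_def by simp
qed

lemma neg_unique: "add a b = zero \<Longrightarrow> neg a = b"
  by (metis neg acancel)

lemma mzero_r: "mul a zero = zero"
proof -
  have "mul a zero = add (mul a zero) (mul a zero)" by (metis distl azero(1))
  hence "add (mul a zero) zero = add (mul a zero) (mul a zero)" by (metis azero(2))
  thus ?thesis by (metis acancel)
qed

definition ninv where "ninv a = nf_inv mul one a"

lemma ninv: assumes "a \<noteq> zero"
  shows "mul a (ninv a) = one" "mul (ninv a) a = one" "ninv a \<noteq> zero"
proof -
  obtain b where b: "b \<noteq> zero" "mul a b = one" "mul b a = one" using ex_inv assms by blast
  have "(THE c. mul a c = one) = b"
  proof (rule the_equality)
    fix c assume "mul a c = one"
    hence "mul b (mul a c) = b" by (simp add: mone)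
    thus "c = b" using b by (metis massoc mone)
  qed (fact b(2))
  thus "mul a (ninv a) = one" "mul (ninv a) a = one" "ninv a \<noteq> zero"
    using b unfolding ninv_def nf_inv_def by simp_all
qed

lemma mzero_l: "mul zero a = zero"
proof (cases "a = zero")
  case True thus ?thesis by (simp add: mzero_r)
next
  case False
  show ?thesis
  proof (rule ccontr)
    assume h: "mul zero a \<noteq> zero"
    have "mul (mul zero a) (ninv a) = zero" using False ninv by (metis massoc mone(2) mzero_r)
    thus False using mnz[OF h ninv(3)[OF False]] by simp
  qed
qed

lemma mcancel_l: "a \<noteq> zero \<Longrightarrow> mul a x = mul a y \<Longrightarrow> x = y"
  by (metis ninv(2) massoc mone(1))
lemma mcancel_r: "x \<noteq> zero \<Longrightarrow> mul a x = mul b x \<Longrightarrow> a = b"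
  by (metis ninv(1) massoc mone(2))

lemma mul_neg_r: "mul a (neg b) = neg (mul a b)"
  by (metis neg distl mzero_r neg_unique)

lemma sq_one: assumes "mul x x = one" shows "x = one \<or> x = neg one"
proof (cases "add x one = zero")
  case True thus ?thesis by (metis neg_unique acomm)
next
  case False
  have "mul x (add x one) = add x one" using assms by (metis distl mone(2) acomm)
  hence "mul x (add x one) = mul one (add x one)" by (simp add: mone)
  thus ?thesis using mcancel_r[OF False] by blast
qed

lemma ee: "mul (neg one) (neg one) = one"
proof -
  have "zero = mul (neg one) (add one (neg one))" by (simp add: neg mzero_r)
  also have "\<dots> = add (neg one) (mul (neg one) (neg one))" by (simp add: distl mone)
  finally have "neg (neg one) = mul (neg one) (neg one)" by (metis neg_unique)
  moreover have "neg (neg one) = one" by (metis neg neg_unique acomm)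
  ultimately show ?thesis by simp
qed

lemma e_comm: "mul a (neg one) = mul (neg one) a"
proof (cases "a = zero")
  case True thus ?thesis by (simp add: mzero_l mzero_r)
next
  case False
  let ?e = "neg one"
  define y where "y = mul a (mul ?e (ninv a))"
  have "mul y y = mul a (mul ?e (mul (mul (ninv a) a) (mul ?e (ninv a))))"
    unfolding y_def by (simp add: massoc)
  also have "\<dots> = one" using False by (simp add: ninv mone massoc[symmetric] ee)
  finally have "y = one \<or> y = ?e" by (rule sq_one)
  thus ?thesis
  proof
    assume "y = one"
    hence "mul y a = a" by (simp add: mone)
    hence "mul a ?e = a" unfolding y_def using False by (simp add: massoc ninv mone)
    hence "?e = one" using mcancel_l[OF False, of ?e one] by (simp add: mone)
    thus ?thesis by (simp add: mone)
  next
    assume "y = ?e"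
    hence "mul y a = mul ?e a" by simp
    thus ?thesis unfolding y_def using False by (simp add: massoc ninv mone)
  qed
qed

lemma neg_e: "mul (neg one) a = neg a"
  by (metis e_comm mul_neg_r mone(2))

lemma mul_eq_zero: "mul a b = zero \<Longrightarrow> a = zero \<or> b = zero"
  using mnz by blast

lemma aut_bij: "mult_aut mul one t \<Longrightarrow> bij t" unfolding mult_aut_def by blast
lemma aut_mul: "mult_aut mul one t \<Longrightarrow> t (mul a b) = mul (t a) (t b)" unfolding mult_aut_def by blast
lemma aut_one: "mult_aut mul one t \<Longrightarrow> t one = one" unfolding mult_aut_def by blast

lemma aut_inv1: "mult_aut mul one t \<Longrightarrow> inv t (t x) = x"
  by (meson aut_bij bij_is_inj inv_f_f)
lemma aut_inv2: "mult_aut mul one t \<Longrightarrow> t (inv t x) = x"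
  by (meson aut_bij bij_is_surj surj_f_inv_f)
lemma aut_inj: "mult_aut mul one t \<Longrightarrow> t x = t y \<Longrightarrow> x = y"
  by (metis aut_inv1)

lemma aut_zero: assumes "mult_aut mul one t" shows "t zero = zero"
proof -
  obtain z where "t z = zero" using aut_inv2[OF assms] by metis
  have "t zero = t (mul zero z)" by (simp add: mzero_l)
  also have "\<dots> = zero" using assms `t z = zero` by (simp add: aut_mul mzero_r)
  finally show ?thesis .
qed

lemma aut_nz: "mult_aut mul one t \<Longrightarrow> x \<noteq> zero \<Longrightarrow> t x \<noteq> zero"
  by (metis aut_zero aut_inj)

lemma aut_invaut: assumes "mult_aut mul one t" shows "mult_aut mul one (inv t)"
  unfolding mult_aut_def
proof (intro conjI allI)
  show "bij (inv t)" using aut_bij[OF assms] by (simp add: bij_imp_bij_inv)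
  fix a b
  have "t (mul (inv t a) (inv t b)) = mul a b"
    using aut_mul[OF assms] aut_inv2[OF assms] by simp
  hence "inv t (mul a b) = inv t (t (mul (inv t a) (inv t b)))" by simp
  thus "inv t (mul a b) = mul (inv t a) (inv t b)" using aut_inv1[OF assms] by simp
next
  show "inv t one = one" using aut_inv1[OF assms, of one] aut_one[OF assms] by simp
qed

lemma aut_e: assumes "mult_aut mul one t" shows "t (neg one) = neg one"
proof -
  have "mul (t (neg one)) (t (neg one)) = one" by (metis assms aut_mul aut_one ee)
  hence "t (neg one) = one \<or> t (neg one) = neg one" by (rule sq_one)
  thus ?thesis by (metis assms aut_one aut_inj)
qed

lemma aut_neg: "mult_aut mul one t \<Longrightarrow> t (neg a) = neg (t a)"
  by (metis neg_e aut_mul aut_e)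

abbreviation at where "at t \<equiv> add_tau add t"

lemma at_zero_l: "mult_aut mul one t \<Longrightarrow> at t zero a = a"
  unfolding add_tau_def by (simp add: aut_zero azero aut_inv1)
lemma at_comm: "at t a b = at t b a"
  unfolding add_tau_def by (simp add: acomm)
lemma at_zero_r: "mult_aut mul one t \<Longrightarrow> at t a zero = a"
  by (metis at_zero_l at_comm)
lemma at_assoc: assumes "mult_aut mul one t" shows "at t (at t a b) c = at t a (at t b c)"
proof -
  have "t (inv t (add (t a) (t b))) = add (t a) (t b)" "t (inv t (add (t b) (t c))) = add (t b) (t c)"
    using aut_inv2[OF assms] by blast+
  thus ?thesis unfolding add_tau_def by (metis aassoc)
qed
lemma at_neg: "mult_aut mul one t \<Longrightarrow> at t a (neg a) = zero"
  unfolding add_tau_def by (metis aut_neg neg aut_zero aut_inv1)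
lemma at_distl: assumes "mult_aut mul one t"
  shows "mul c (at t a b) = at t (mul c a) (mul c b)"
proof -
  have "at t (mul c a) (mul c b) = inv t (mul (t c) (add (t a) (t b)))"
    unfolding add_tau_def using assms by (simp add: aut_mul distl)
  also have "\<dots> = mul c (at t a b)" unfolding add_tau_def
    using aut_mul[OF aut_invaut[OF assms]] aut_inv1[OF assms] by simp
  finally show ?thesis by simp
qed

end
locale NFS = NF add mul zero one for add mul :: "'a \<Rightarrow> 'a \<Rightarrow> 'a" and zero one :: 'a +
  fixes \<sigma> \<rho> :: "'i \<Rightarrow> 'a \<Rightarrow> 'a"
  assumes sa: "\<And>i. mult_aut mul one (\<sigma> i)"
    and ra: "\<And>i. mult_aut mul one (\<rho> i)"
begin

abbreviation "V \<equiv> fsupp_fams zero :: ('i \<Rightarrow> 'a) set"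
abbreviation "A \<equiv> add_sigma add \<sigma>"
abbreviation "S \<equiv> smult_rho mul \<rho>"
abbreviation "Z \<equiv> (\<lambda>i::'i. zero)"

lemma A_app: "A f g i = at (\<sigma> i) (f i) (g i)" unfolding add_sigma_def by simp
lemma S_app: "S a f i = mul (\<rho> i a) (f i)" unfolding smult_rho_def by simp

lemma V_A: assumes "f \<in> V" "g \<in> V" shows "A f g \<in> V"
proof -
  have "{i. A f g i \<noteq> zero} \<subseteq> {i. f i \<noteq> zero} \<union> {i. g i \<noteq> zero}"
    using at_zero_l[OF sa] by (auto simp: A_app)
  thus ?thesis using assms unfolding fsupp_fams_def by (auto intro: finite_subset)
qed

lemma V_S: assumes "f \<in> V" shows "S a f \<in> V"
proof -
  have "{i. S a f i \<noteq> zero} \<subseteq> {i. f i \<noteq> zero}"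
    by (auto simp: S_app) (metis mzero_r)
  thus ?thesis using assms unfolding fsupp_fams_def by (auto intro: finite_subset)
qed

lemma Z_V: "Z \<in> V" unfolding fsupp_fams_def by simp

lemma V_neg: assumes "f \<in> V" shows "(\<lambda>i. neg (f i)) \<in> V"
proof -
  have "{i. neg (f i) \<noteq> zero} \<subseteq> {i. f i \<noteq> zero}"
    using neg_unique[of zero zero] azero by auto
  thus ?thesis using assms unfolding fsupp_fams_def by (auto intro: finite_subset)
qed

lemma free: assumes "S a u = S b u" "u \<noteq> Z" shows "a = b"
proof -
  obtain i where i: "u i \<noteq> zero" using assms(2) by blast
  have "mul (\<rho> i a) (u i) = mul (\<rho> i b) (u i)" using fun_cong[OF assms(1), of i] by (simp add: S_app)
  hence "\<rho> i a = \<rho> i b" using mcancel_r[OF i] by blast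
  thus ?thesis using aut_inj[OF ra] by blast
qed

definition tau :: "'i \<Rightarrow> 'a \<Rightarrow> 'a \<Rightarrow> 'a" where
  "tau j g = \<sigma> j \<circ> \<rho> j \<circ> conj_map mul one g"

lemma tau_formula: assumes "g \<noteq> zero"
  shows "mul (\<sigma> j (\<rho> j g)) (tau j g x) = \<sigma> j (\<rho> j (mul x g))"
proof -
  have "mul (\<sigma> j (\<rho> j g)) (tau j g x) = \<sigma> j (\<rho> j (mul g (mul (ninv g) (mul x g))))"
    unfolding tau_def conj_map_def ninv_def[symmetric] by (simp add: aut_mul[OF sa] aut_mul[OF ra])
  also have "\<dots> = \<sigma> j (\<rho> j (mul x g))" using assms by (simp add: massoc[symmetric] ninv mone)
  finally show ?thesis .
qed

lemma tau_bij: assumes "g \<noteq> zero" shows "bij (tau j g)"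
proof -
  have "bij (conj_map mul one g)"
  proof (rule o_bij)
    have c1: "mul (ninv g) (mul g y) = y" "mul g (mul (ninv g) y) = y" for y
      using assms by (simp_all add: massoc[symmetric] ninv mone)
    show "conj_map mul one g \<circ> (\<lambda>x. mul g (mul x (ninv g))) = id"
      using assms by (auto simp: conj_map_def ninv_def[symmetric] massoc c1 ninv mone)
    show "(\<lambda>x. mul g (mul x (ninv g))) \<circ> conj_map mul one g = id"
      using assms by (auto simp: conj_map_def ninv_def[symmetric] massoc c1 ninv mone)
  qed
  thus ?thesis unfolding tau_def using aut_bij[OF sa] aut_bij[OF ra] by (simp add: bij_comp)
qed

definition ue where "ue g j = S g (unit_fam zero one j)"

lemma ue_app: "ue g j i = (if i = j then \<rho> j g else zero)"
  unfolding ue_def unit_fam_def by (auto simp: S_app mone mzero_r)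

lemma ue_V: "ue g j \<in> V"
proof -
  have "{i. ue g j i \<noteq> zero} \<subseteq> {j}" by (auto simp: ue_app)
  thus ?thesis unfolding fsupp_fams_def by (auto intro: finite_subset)
qed

lemma ue_nz: "g \<noteq> zero \<Longrightarrow> ue g j \<noteq> Z"
  by (metis ue_app aut_nz[OF ra])

lemma key: assumes "g \<noteq> zero"
  shows "A (S a (ue g j)) (S b (ue g j)) = S (add_tau add (tau j g) a b) (ue g j)"
proof
  fix i
  show "A (S a (ue g j)) (S b (ue g j)) i = S (add_tau add (tau j g) a b) (ue g j) i"
  proof (cases "i = j")
    case False thus ?thesis by (simp add: A_app S_app ue_app mzero_r at_zero_l[OF sa])
  next
    case True
    let ?s = "\<sigma> j" and ?r = "\<rho> j" and ?c = "add_tau add (tau j g) a b"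
    let ?k = "?s (?r g)"
    have tc: "tau j g ?c = add (tau j g a) (tau j g b)"
      unfolding add_tau_def by (meson tau_bij[OF assms] bij_is_surj surj_f_inv_f)
    have "?s (?r (mul ?c g)) = mul ?k (tau j g ?c)" using tau_formula[OF assms] by simp
    also have "\<dots> = add (?s (?r (mul a g))) (?s (?r (mul b g)))"
      using tau_formula[OF assms] by (simp add: tc distl)
    finally have e: "?s (?r (mul ?c g)) = add (?s (?r (mul a g))) (?s (?r (mul b g)))" .
    have "S ?c (ue g j) i = ?r (mul ?c g)" using True by (simp add: S_app ue_app aut_mul[OF ra])
    also have "\<dots> = inv ?s (?s (?r (mul ?c g)))" using aut_inv1[OF sa] by simp
    also have "\<dots> = A (S a (ue g j)) (S b (ue g j)) i"
      using True e by (simp add: A_app S_app ue_app aut_mul[OF ra] add_tau_def)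
    finally show ?thesis by simp
  qed
qed

lemma in_Q: assumes "g \<noteq> zero" shows "ue g j \<in> quasi_kernel V A S"
  unfolding quasi_kernel_def using key[OF assms] ue_V by blast

lemma add_u_eq: assumes "g \<noteq> zero" shows "add_u A S (ue g j) = add_tau add (tau j g)"
proof (intro ext)
  fix a b
  show "add_u A S (ue g j) a b = add_tau add (tau j g) a b"
    unfolding add_u_def
  proof (rule the_equality)
    show "A (S a (ue g j)) (S b (ue g j)) = S (add_tau add (tau j g) a b) (ue g j)" by (rule key[OF assms])
    fix c assume "A (S a (ue g j)) (S b (ue g j)) = S c (ue g j)"
    thus "c = add_tau add (tau j g) a b" using key[OF assms] free ue_nz[OF assms] by metis
  qed
qed

lemma gen_sub: "add_gen V A Z Q \<subseteq> V" if "Q \<subseteq> V"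
proof
  fix x assume "x \<in> add_gen V A Z Q"
  thus "x \<in> V" by induct (use that Z_V V_A in auto)
qed

lemma V_gen: assumes "f \<in> V" shows "f \<in> add_gen V A Z (quasi_kernel V A S)"
proof -
  have fin: "finite {i. f i \<noteq> zero}" using assms unfolding fsupp_fams_def by simp
  have "\<forall>f. {i. f i \<noteq> zero} \<subseteq> F \<longrightarrow> f \<in> add_gen V A Z (quasi_kernel V A S)" if "finite F" for F
    using that
  proof (induct F rule: finite_induct)
    case empty
    show ?case
    proof (intro allI impI)
      fix f :: "'i \<Rightarrow> 'a" assume "{i. f i \<noteq> zero} \<subseteq> {}"
      hence "f = Z" by auto
      thus "f \<in> add_gen V A Z (quasi_kernel V A S)" by (simp add: add_gen.gen_zero)
    qed
  next
    case (insert j F)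
    show ?case
    proof (intro allI impI)
      fix f :: "'i \<Rightarrow> 'a" assume sub: "{i. f i \<noteq> zero} \<subseteq> insert j F"
      let ?g = "f(j := zero)"
      have "{i. ?g i \<noteq> zero} \<subseteq> F" using sub by auto
      hence g: "?g \<in> add_gen V A Z (quasi_kernel V A S)" using insert(3) by blast
      show "f \<in> add_gen V A Z (quasi_kernel V A S)"
      proof (cases "f j = zero")
        case True thus ?thesis using g by (metis fun_upd_triv)
      next
        case False
        let ?y = "inv (\<rho> j) (f j)"
        have y: "?y \<noteq> zero" using False by (metis aut_inv2[OF ra] aut_zero[OF ra])
        have eq: "A ?g (ue ?y j) = f"
        proof
          fix i show "A ?g (ue ?y j) i = f i"
            by (cases "i = j") (simp_all add: A_app ue_app aut_inv2[OF ra] at_zero_l[OF sa] at_zero_r[OF sa])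
        qed
        have "A ?g (ue ?y j) \<in> add_gen V A Z (quasi_kernel V A S)"
          by (rule add_gen.gen_add[OF g add_gen.gen_base[OF in_Q[OF y]]])
        thus ?thesis using eq by simp
      qed
    qed
  qed
  thus ?thesis using fin by blast
qed

lemma nvs: "near_vector_space add mul zero one V A Z S"
  unfolding near_vector_space_def
proof (intro conjI ballI allI impI)
  show "Z \<in> V" by (rule Z_V)
  fix u w assume u: "u \<in> V" and w: "w \<in> V"
  show "A u w \<in> V" using u w by (rule V_A)
  show "A u w = A w u" by (rule ext) (simp add: A_app at_comm)
  fix a show "S a (A u w) = A (S a u) (S a w)" by (rule ext) (simp add: A_app S_app at_distl[OF sa])
next
  fix u w x show "A (A u w) x = A u (A w x)" by (rule ext) (simp add: A_app at_assoc[OF sa])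
next
  fix u show "A Z u = u" by (rule ext) (simp add: A_app at_zero_l[OF sa])
next
  fix u assume u: "u \<in> V"
  show "\<exists>w\<in>V. A u w = Z"
    by (rule bexI[of _ "\<lambda>i. neg (u i)"]) (auto simp: A_app at_neg[OF sa] V_neg[OF u])
next
  fix a u assume "u \<in> V" thus "S a u \<in> V" by (rule V_S)
next
  fix a b u show "S (mul a b) u = S a (S b u)" by (rule ext) (simp add: S_app aut_mul[OF ra] massoc)
next
  fix u show "S zero u = Z" by (rule ext) (simp add: S_app aut_zero[OF ra] mzero_l)
next
  fix u show "S one u = u" by (rule ext) (simp add: S_app aut_one[OF ra] mone)
next
  fix u show "A u (S (nf_neg add zero one) u) = Z"
    by (rule ext) (simp add: A_app S_app neg_def[symmetric] aut_e[OF ra] neg_e at_neg[OF sa])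
next
  fix a b u assume "S a u = S b u" thus "u = Z \<or> a = b" using free by blast
next
  show "V = add_gen V A Z (quasi_kernel V A S)"
    using gen_sub[of "quasi_kernel V A S"] V_gen unfolding quasi_kernel_def by blast
qed

end

theorem mainTheorem6:
  fixes add mul :: "'a \<Rightarrow> 'a \<Rightarrow> 'a" and zero one :: 'a
    and \<sigma> \<rho> :: "'i \<Rightarrow> 'a \<Rightarrow> 'a"
  assumes "near_field add mul zero one"
    and "\<And>i. mult_aut mul one (\<sigma> i)"
    and "\<And>i. mult_aut mul one (\<rho> i)"
  shows "near_vector_space add mul zero one (fsupp_fams zero)
           (add_sigma add \<sigma>) (\<lambda>i. zero) (smult_rho mul \<rho>)
       \<and> (\<forall>j \<gamma>. \<gamma> \<noteq> zero \<longrightarrow>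
            smult_rho mul \<rho> \<gamma> (unit_fam zero one j)
               \<in> quasi_kernel (fsupp_fams zero) (add_sigma add \<sigma>) (smult_rho mul \<rho>)
          \<and> add_u (add_sigma add \<sigma>) (smult_rho mul \<rho>) (smult_rho mul \<rho> \<gamma> (unit_fam zero one j))
              = add_tau add (\<sigma> j \<circ> \<rho> j \<circ> conj_map mul one \<gamma>))"
proof -
  interpret NFS add mul zero one \<sigma> \<rho>
    using assms by (unfold_locales) auto
  show ?thesis using nvs in_Q add_u_eq unfolding ue_def tau_def by blast
qed

end
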